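(* Let $t\geq 2$, $n\geq 1$ be integers and let $P$ be a finite poset with the unique cover twin property (UCTP) having at least three elements. If $\mathcal{F}\subseteq[t]^n$ is induced $P$-saturated, then every coordinate $i\in[n]$ is separating for $\mathcal{F}$.
   Context: For positive integers $n,t$, $[n]=\{1,\dots,n\}$ and $[t]^n$ is the set of functions $f:[n]\to[t]$, partially ordered by $f\leq g$ iff $f(i)\leq g(i)$ for all $i$. An induced copy of $P$ in $\mathcal{F}\subseteq[t]^n$ is an injective map $\phi:P\to\mathcal{F}$ with $\phi(x)\leq\phi(y)$ iff $x\leq_P y$. $\mathcal{F}$ is induced $P$-free if it contains no induced copy of $P$, and induced $P$-saturated if it is induced $P$-free and for every $f\in[t]^n\setminus\mathcal{F}$, $\mathcal{F}\cup\{f\}$ contains an induced copy of $P$. For $f\in[t]^n$, $D_i(f)\in[t]^{n-1}$ is obtained by deleting coordinate $i$: $D_i(f)(x)=f(x)$ for $x<i$, $D_i(f)(x)=f(x+1)$ for $i\leq x\leq n-1$. Coordinate $i$ is separating for $\mathcal{F}$ if there exist distinct $f,f'\in\mathcal{F}$ with $D_i(f)\leq D_i(f')$ and $f(i)>f'(i)$. In a poset $P$, $x$ covers $y\neq x$ if $y\leq_P x$ and no $z\in P\setminus\{x,y\}$ satisfies $y\leq_P z\leq_P x$. $P$ has the UCTP if whenever $x$ covers $y$, there exists $y'\in P\setminus\{x,y\}$ such that $x$ covers $y'$. *)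

theory Defs
  imports Main
begin

text \<open>Elements of [t]^n are represented as functions nat \<Rightarrow> nat with values in {1..t}
  on {1..n} and value 0 outside {1..n} (canonical representation).\<close>

definition grid :: "nat \<Rightarrow> nat \<Rightarrow> (nat \<Rightarrow> nat) set" where
  "grid t n = {f. (\<forall>x\<in>{1..n}. 1 \<le> f x \<and> f x \<le> t) \<and> (\<forall>x. x \<notin> {1..n} \<longrightarrow> f x = 0)}"

definition gle :: "nat \<Rightarrow> (nat \<Rightarrow> nat) \<Rightarrow> (nat \<Rightarrow> nat) \<Rightarrow> bool" where
  "gle n f g \<longleftrightarrow> (\<forall>i\<in>{1..n}. f i \<le> g i)"

definition is_poset :: "'a set \<Rightarrow> ('a \<Rightarrow> 'a \<Rightarrow> bool) \<Rightarrow> bool" where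
  "is_poset P le \<longleftrightarrow> (\<forall>x\<in>P. le x x) \<and>
     (\<forall>x\<in>P. \<forall>y\<in>P. le x y \<and> le y x \<longrightarrow> x = y) \<and>
     (\<forall>x\<in>P. \<forall>y\<in>P. \<forall>z\<in>P. le x y \<and> le y z \<longrightarrow> le x z)"

definition induced_copy ::
  "'a set \<Rightarrow> ('a \<Rightarrow> 'a \<Rightarrow> bool) \<Rightarrow> nat \<Rightarrow> (nat \<Rightarrow> nat) set \<Rightarrow> ('a \<Rightarrow> nat \<Rightarrow> nat) \<Rightarrow> bool" where
  "induced_copy P le n F \<phi> \<longleftrightarrow> inj_on \<phi> P \<and> \<phi> ` P \<subseteq> F \<and>
     (\<forall>x\<in>P. \<forall>y\<in>P. gle n (\<phi> x) (\<phi> y) \<longleftrightarrow> le x y)"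

definition induced_free ::
  "'a set \<Rightarrow> ('a \<Rightarrow> 'a \<Rightarrow> bool) \<Rightarrow> nat \<Rightarrow> (nat \<Rightarrow> nat) set \<Rightarrow> bool" where
  "induced_free P le n F \<longleftrightarrow> \<not> (\<exists>\<phi>. induced_copy P le n F \<phi>)"

definition induced_saturated ::
  "'a set \<Rightarrow> ('a \<Rightarrow> 'a \<Rightarrow> bool) \<Rightarrow> nat \<Rightarrow> nat \<Rightarrow> (nat \<Rightarrow> nat) set \<Rightarrow> bool" where
  "induced_saturated P le t n F \<longleftrightarrow> F \<subseteq> grid t n \<and> induced_free P le n F \<and>
     (\<forall>f \<in> grid t n - F. \<not> induced_free P le n (F \<union> {f}))"

definition del_coord :: "nat \<Rightarrow> nat \<Rightarrow> (nat \<Rightarrow> nat) \<Rightarrow> (nat \<Rightarrow> nat)" where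
  "del_coord n i f = (\<lambda>x. if 1 \<le> x \<and> x < i then f x
                          else if i \<le> x \<and> x \<le> n - 1 \<and> 1 \<le> x then f (x + 1) else 0)"

definition separating :: "nat \<Rightarrow> (nat \<Rightarrow> nat) set \<Rightarrow> nat \<Rightarrow> bool" where
  "separating n F i \<longleftrightarrow> (\<exists>f\<in>F. \<exists>f'\<in>F. f \<noteq> f' \<and>
     gle (n - 1) (del_coord n i f) (del_coord n i f') \<and> f i > f' i)"

definition covers :: "'a set \<Rightarrow> ('a \<Rightarrow> 'a \<Rightarrow> bool) \<Rightarrow> 'a \<Rightarrow> 'a \<Rightarrow> bool" where
  "covers P le x y \<longleftrightarrow> x \<in> P \<and> y \<in> P \<and> y \<noteq> x \<and> le y x \<and>
     \<not> (\<exists>z \<in> P - {x, y}. le y z \<and> le z x)"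

definition UCTP :: "'a set \<Rightarrow> ('a \<Rightarrow> 'a \<Rightarrow> bool) \<Rightarrow> bool" where
  "UCTP P le \<longleftrightarrow> (\<forall>x\<in>P. \<forall>y\<in>P. covers P le x y \<longrightarrow> (\<exists>y'\<in>P - {x, y}. covers P le x y'))"

end

theory Submission
  imports Defs
begin

lemma gle_del:
  assumes i: "i \<in> {1..n}"
  shows "gle n f h \<longleftrightarrow> gle (n - 1) (del_coord n i f) (del_coord n i h) \<and> f i \<le> h i"
proof
  assume H: "gle n f h"
  have "gle (n - 1) (del_coord n i f) (del_coord n i h)"
    unfolding gle_def del_coord_def
  proof
    fix x assume x: "x \<in> {1..n - 1}"
    show "(if 1 \<le> x \<and> x < i then f x else if i \<le> x \<and> x \<le> n - 1 \<and> 1 \<le> x then f (x + 1) else 0)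
        \<le> (if 1 \<le> x \<and> x < i then h x else if i \<le> x \<and> x \<le> n - 1 \<and> 1 \<le> x then h (x + 1) else 0)"
      using H x i unfolding gle_def by auto
  qed
  moreover have "f i \<le> h i" using H i unfolding gle_def by auto
  ultimately show "gle (n - 1) (del_coord n i f) (del_coord n i h) \<and> f i \<le> h i" by simp
next
  assume H: "gle (n - 1) (del_coord n i f) (del_coord n i h) \<and> f i \<le> h i"
  show "gle n f h" unfolding gle_def
  proof
    fix j assume j: "j \<in> {1..n}"
    show "f j \<le> h j"
    proof (cases "j < i")
      case True
      have "j \<in> {1..n-1}" using True j i by auto
      then have "del_coord n i f j \<le> del_coord n i h j" using H unfolding gle_def by blast
      then show ?thesis using True j unfolding del_coord_def by auto
    next
      case False
      show ?thesis
      proof (cases "j = i")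
        case True then show ?thesis using H by simp
      next
        case False2: False
        have jj: "j - 1 \<in> {1..n-1}" "\<not> (j - 1 < i)" "i \<le> j - 1" "j - 1 + 1 = j"
          using False False2 j i by auto
        then have "del_coord n i f (j-1) \<le> del_coord n i h (j-1)" using H unfolding gle_def by blast
        then show ?thesis using jj unfolding del_coord_def by auto
      qed
    qed
  qed
qed

lemma del_upd:
  assumes "i \<in> {1..n}"
  shows "del_coord n i (f(i := c)) = del_coord n i f"
  using assms unfolding del_coord_def by (auto simp: fun_eq_iff)

lemma twin:
  assumes sat: "induced_saturated P le t n F"
    and po: "is_poset P le" and uc: "UCTP P le"
    and fF: "f \<in> F" and gG: "g \<in> grid t n" and gF: "g \<notin> F"
    and cmp: "gle n f g \<or> gle n g f"
    and tw: "\<And>h. h \<in> F \<Longrightarrow> h \<noteq> f \<Longrightarrow> (gle n h g \<longleftrightarrow> gle n h f) \<and> (gle n g h \<longleftrightarrow> gle n f h)"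
  shows False
proof -
  have free: "induced_free P le n F" using sat unfolding induced_saturated_def by auto
  have "\<not> induced_free P le n (F \<union> {g})" using sat gG gF unfolding induced_saturated_def by auto
  then obtain \<phi> where phi: "induced_copy P le n (F \<union> {g}) \<phi>" unfolding induced_free_def by auto
  have inj: "inj_on \<phi> P" and im: "\<phi> ` P \<subseteq> F \<union> {g}"
    and ord: "\<And>x y. x \<in> P \<Longrightarrow> y \<in> P \<Longrightarrow> gle n (\<phi> x) (\<phi> y) \<longleftrightarrow> le x y"
    using phi unfolding induced_copy_def by auto
  have refl: "\<And>x. x \<in> P \<Longrightarrow> le x x" and anti: "\<And>x y. x \<in> P \<Longrightarrow> y \<in> P \<Longrightarrow> le x y \<Longrightarrow> le y x \<Longrightarrow> x = y"
    using po unfolding is_poset_def by blast+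
  have "g \<in> \<phi> ` P"
  proof (rule ccontr)
    assume "g \<notin> \<phi> ` P"
    then have "\<phi> ` P \<subseteq> F" using im by auto
    then have "induced_copy P le n F \<phi>" using phi unfolding induced_copy_def by auto
    then show False using free unfolding induced_free_def by auto
  qed
  then obtain x where xP: "x \<in> P" and phx: "\<phi> x = g" by auto
  have oth: "\<And>z. z \<in> P \<Longrightarrow> z \<noteq> x \<Longrightarrow> \<phi> z \<in> F"
  proof -
    fix z assume z: "z \<in> P" "z \<noteq> x"
    have "\<phi> z \<noteq> g" using inj z xP phx unfolding inj_on_def by metis
    moreover have "\<phi> z \<in> F \<union> {g}" using im z by blast
    ultimately show "\<phi> z \<in> F" by blast
  qed
  show False
  proof (cases "f \<in> \<phi> ` P")
    case False
    define \<psi> where "\<psi> = \<phi>(x := f)"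
    have oth2: "\<And>z. z \<in> P \<Longrightarrow> z \<noteq> x \<Longrightarrow> \<phi> z \<in> F - {f}" using oth False by auto
    have "inj_on \<psi> P" unfolding \<psi>_def inj_on_def
    proof (intro ballI impI)
      fix y z assume y: "y \<in> P" and z: "z \<in> P" and e: "(\<phi>(x := f)) y = (\<phi>(x := f)) z"
      show "y = z"
      proof (cases "y = x"; cases "z = x")
        assume "y = x" "z \<noteq> x" then show ?thesis using e oth2 z by auto
      next
        assume "y \<noteq> x" "z = x" then show ?thesis using e oth2 y by auto
      next
        assume "y \<noteq> x" "z \<noteq> x" then show ?thesis using e inj y z by (auto simp: inj_on_def)
      qed simp
    qed
    moreover have "\<psi> ` P \<subseteq> F" unfolding \<psi>_def using oth fF by auto
    moreover have "\<forall>y\<in>P. \<forall>z\<in>P. gle n (\<psi> y) (\<psi> z) \<longleftrightarrow> le y z"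
    proof (intro ballI)
      fix y z assume y: "y \<in> P" and z: "z \<in> P"
      show "gle n (\<psi> y) (\<psi> z) \<longleftrightarrow> le y z"
      proof (cases "y = x"; cases "z = x")
        assume "y = x" "z = x" then show ?thesis using refl xP unfolding \<psi>_def gle_def by auto
      next
        assume a: "y = x" "z \<noteq> x"
        then have "gle n (\<psi> y) (\<psi> z) = gle n g (\<phi> z)" unfolding \<psi>_def using tw oth2 z by auto
        then show ?thesis using ord a xP z phx by auto
      next
        assume a: "y \<noteq> x" "z = x"
        then have "gle n (\<psi> y) (\<psi> z) = gle n (\<phi> y) g" unfolding \<psi>_def using tw oth2 y by auto
        then show ?thesis using ord a xP y phx by auto
      next
        assume a: "y \<noteq> x" "z \<noteq> x"
        then show ?thesis unfolding \<psi>_def using ord y z by auto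
      qed
    qed
    ultimately have "induced_copy P le n F \<psi>" unfolding induced_copy_def by auto
    then show False using free unfolding induced_free_def by auto
  next
    case True
    then obtain y where yP: "y \<in> P" and phy: "\<phi> y = f" by auto
    have yx: "y \<noteq> x" using phy phx fF gF by auto
    have oth3: "\<And>z. z \<in> P \<Longrightarrow> z \<noteq> x \<Longrightarrow> z \<noteq> y \<Longrightarrow> \<phi> z \<in> F - {f}"
      using oth phy inj yP by (metis DiffI inj_on_def singletonD)
    from cmp show False
    proof
      assume c: "gle n f g"
      then have lyx: "le y x" using ord yP xP phx phy by auto
      have nz: "\<not> (\<exists>z\<in>P - {x, y}. le y z \<and> le z x)"
      proof
        assume "\<exists>z\<in>P - {x, y}. le y z \<and> le z x"
        then obtain z where z: "z \<in> P" "z \<noteq> x" "z \<noteq> y" "le y z" "le z x" by auto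
        have "gle n (\<phi> z) g" using ord z xP phx by auto
        then have "gle n (\<phi> z) f" using tw oth3 z by auto
        then have "le z y" using ord z yP phy by auto
        then show False using anti z yP by auto
      qed
      have cov: "covers P le x y" unfolding covers_def using xP yP yx lyx nz by blast
      then obtain y' where y': "y' \<in> P - {x, y}" "covers P le x y'" using uc xP yP unfolding UCTP_def by blast
      have "le y' x" using y' unfolding covers_def by auto
      then have "gle n (\<phi> y') g" using ord y' xP phx by auto
      then have "gle n (\<phi> y') f" using tw oth3 y' by auto
      then have "le y' y" using ord y' yP phy by auto
      then show False using y' yP lyx yx unfolding covers_def by auto
    next
      assume c: "gle n g f"
      then have lxy: "le x y" using ord yP xP phx phy by auto
      have nz: "\<not> (\<exists>z\<in>P - {y, x}. le x z \<and> le z y)"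
      proof
        assume "\<exists>z\<in>P - {y, x}. le x z \<and> le z y"
        then obtain z where z: "z \<in> P" "z \<noteq> x" "z \<noteq> y" "le x z" "le z y" by auto
        have "gle n g (\<phi> z)" using ord z xP phx by auto
        then have "gle n f (\<phi> z)" using tw oth3 z by auto
        then have "le y z" using ord z yP phy by auto
        then show False using anti z yP by auto
      qed
      have cov: "covers P le y x" unfolding covers_def using xP yP yx lxy nz by blast
      then obtain y' where y': "y' \<in> P - {y, x}" "covers P le y y'" using uc xP yP unfolding UCTP_def by blast
      have "le y' y" using y' unfolding covers_def by auto
      then have "gle n (\<phi> y') f" using ord y' yP phy by auto
      then have "gle n (\<phi> y') g" using tw oth3 y' by auto
      then have "le y' x" using ord y' xP phx by auto
      then show False using y' xP lxy yx unfolding covers_def by auto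
    qed
  qed
qed


lemma sum_less_grid:
  assumes "f \<in> grid t n" "h \<in> grid t n" "gle n h f" "h \<noteq> f"
  shows "(\<Sum>j\<in>{1..n}. h j) < (\<Sum>j\<in>{1..n}. f j)"
proof -
  obtain j where j: "h j \<noteq> f j" using assms(4) by auto
  have jn: "j \<in> {1..n}"
  proof (rule ccontr)
    assume "j \<notin> {1..n}"
    then have "h j = 0" "f j = 0" using assms(1,2) unfolding grid_def by blast+
    then show False using j by simp
  qed
  show ?thesis
  proof (rule sum_strict_mono_ex1)
    show "\<forall>x\<in>{1..n}. h x \<le> f x" using assms(3) unfolding gle_def by auto
    show "\<exists>a\<in>{1..n}. h a < f a" using jn j assms(3) unfolding gle_def
      by (metis le_neq_implies_less)
  qed simp
qed

lemma cosum_less_grid: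
  assumes "f \<in> grid t n" "h \<in> grid t n" "gle n f h" "h \<noteq> f"
  shows "(\<Sum>j\<in>{1..n}. t - h j) < (\<Sum>j\<in>{1..n}. t - f j)"
proof -
  obtain j where j: "h j \<noteq> f j" using assms(4) by auto
  have jn: "j \<in> {1..n}"
  proof (rule ccontr)
    assume "j \<notin> {1..n}"
    then have "h j = 0" "f j = 0" using assms(1,2) unfolding grid_def by blast+
    then show False using j by simp
  qed
  have ht: "h j \<le> t" using jn assms(2) unfolding grid_def by auto
  show ?thesis
  proof (rule sum_strict_mono_ex1)
    show "\<forall>x\<in>{1..n}. t - h x \<le> t - f x" using assms(3) unfolding gle_def by auto
    show "\<exists>a\<in>{1..n}. t - h a < t - f a" using jn j ht assms(3) unfolding gle_def
      by (metis diff_less_mono2 le_neq_implies_less order.strict_trans2)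
  qed simp
qed

theorem mainTheorem9:
  fixes t n :: nat and P :: "'a set" and le :: "'a \<Rightarrow> 'a \<Rightarrow> bool"
    and F :: "(nat \<Rightarrow> nat) set"
  assumes "t \<ge> 2" and "n \<ge> 1"
    and "finite P" and "is_poset P le" and "UCTP P le" and "card P \<ge> 3"
    and "induced_saturated P le t n F"
  shows "\<forall>i\<in>{1..n}. separating n F i"
proof (intro ballI, rule ccontr)
  fix i assume i: "i \<in> {1..n}" and ns: "\<not> separating n F i"
  define D where "D = del_coord n i"
  have NS: "\<And>f h. f \<in> F \<Longrightarrow> h \<in> F \<Longrightarrow> f \<noteq> h \<Longrightarrow> gle (n - 1) (D f) (D h) \<Longrightarrow> f i \<le> h i"
    using ns unfolding separating_def D_def by (meson not_le_imp_less)
  have E: "\<And>f h. gle n f h \<longleftrightarrow> gle (n - 1) (D f) (D h) \<and> f i \<le> h i"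
    unfolding D_def using gle_del[OF i] by blast
  have DU: "\<And>f c. D (f(i := c)) = D f" unfolding D_def using del_upd[OF i] by blast
  have FG: "F \<subseteq> grid t n" using assms(7) unfolding induced_saturated_def by auto
  have Fne: "F \<noteq> {}"
  proof
    assume F0: "F = {}"
    define g0 :: "nat \<Rightarrow> nat" where "g0 = (\<lambda>x. if x \<in> {1..n} then 1 else 0)"
    have "g0 \<in> grid t n" unfolding g0_def grid_def using assms(1) by auto
    then have "\<not> induced_free P le n {g0}" using assms(7) F0 unfolding induced_saturated_def by auto
    then obtain \<phi> where phi: "inj_on \<phi> P" "\<phi> ` P \<subseteq> {g0}"
      unfolding induced_free_def induced_copy_def by auto
    have "card (\<phi> ` P) \<le> card {g0}" using phi(2) by (intro card_mono) auto
    then have "card P \<le> 1" using card_image[OF phi(1)] by simp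
    then show False using assms(6) by simp
  qed
  have gleR: "\<And>f. gle n f f" unfolding gle_def by auto
  have notinF: "\<And>f c. f \<in> F \<Longrightarrow> c \<noteq> f i \<Longrightarrow> f(i := c) \<notin> F"
  proof
    fix f c assume f: "f \<in> F" and c: "c \<noteq> f i" and g: "f(i := c) \<in> F"
    have ne: "f(i := c) \<noteq> f" using c by (metis fun_upd_same)
    have "gle (n - 1) (D f) (D (f(i := c)))" using DU gleR E by metis
    then have "f i \<le> c" using NS[OF f g ne[symmetric]] by simp
    moreover have "gle (n - 1) (D (f(i := c))) (D f)" using DU gleR E by metis
    then have "c \<le> f i" using NS[OF g f ne] by simp
    ultimately show False using c by simp
  qed
  have upd_grid: "\<And>f c. f \<in> grid t n \<Longrightarrow> 1 \<le> c \<Longrightarrow> c \<le> t \<Longrightarrow> f(i := c) \<in> grid t n"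
    using i unfolding grid_def by auto
  show False
  proof (cases "\<exists>f\<in>F. f i = 1")
    case True
    define A where "A = {f \<in> F. f i = 1}"
    define \<mu> where "\<mu> = (\<lambda>f::nat\<Rightarrow>nat. \<Sum>j\<in>{1..n}. t - f j)"
    have "\<exists>m. \<exists>f\<in>A. \<mu> f = m" using True unfolding A_def by auto
    define m where "m = (LEAST k. \<exists>f\<in>A. \<mu> f = k)"
    have m1: "\<exists>f\<in>A. \<mu> f = m" unfolding m_def by (rule LeastI_ex) fact
    have m2: "\<And>h. h \<in> A \<Longrightarrow> m \<le> \<mu> h" unfolding m_def by (rule Least_le) auto
    from m1 m2 obtain f where fA: "f \<in> A" and fmin: "\<And>h. h \<in> A \<Longrightarrow> \<mu> f \<le> \<mu> h" by metis
    have fF: "f \<in> F" and fi: "f i = 1" using fA unfolding A_def by auto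
    define g where "g = f(i := 2)"
    have gG: "g \<in> grid t n" unfolding g_def using upd_grid FG fF assms(1) by auto
    have gF: "g \<notin> F" unfolding g_def using notinF fF fi by auto
    have gi: "g i = 2" and Dg: "D g = D f" unfolding g_def using DU by auto
    have cmp: "gle n f g" using E Dg gleR fi gi by (metis one_le_numeral)
    show False
    proof (rule twin[OF assms(7) assms(4) assms(5) fF gG gF])
      show "gle n f g \<or> gle n g f" using cmp by simp
    next
      fix h assume hF: "h \<in> F" and hf: "h \<noteq> f"
      have hG: "h \<in> grid t n" using hF FG by auto
      have h1: "1 \<le> h i" using hG i unfolding grid_def by auto
      have a: "gle n h g \<longleftrightarrow> gle n h f"
        using E[of h g] E[of h f] Dg NS[OF hF fF hf] fi gi by auto
      have b: "gle n g h \<longleftrightarrow> gle n f h"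
      proof
        assume "gle n g h" then show "gle n f h" using E[of g h] E[of f h] Dg fi gi by auto
      next
        assume fh: "gle n f h"
        have "h i \<noteq> 1"
        proof
          assume "h i = 1"
          then have "h \<in> A" using hF unfolding A_def by auto
          then have "\<mu> f \<le> \<mu> h" using fmin by auto
          moreover have "\<mu> h < \<mu> f" unfolding \<mu>_def
            using cosum_less_grid[of f t n h] FG fF hG fh hf by auto
          ultimately show False by simp
        qed
        then have "2 \<le> h i" using h1 by simp
        then show "gle n g h" using E[of g h] E[of f h] Dg gi fh by auto
      qed
      show "(gle n h g \<longleftrightarrow> gle n h f) \<and> (gle n g h \<longleftrightarrow> gle n f h)" using a b by simp
    qed
  next
    case False
    define \<sigma> where "\<sigma> = (\<lambda>f::nat\<Rightarrow>nat. \<Sum>j\<in>{1..n}. f j)"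
    have "\<exists>m. \<exists>f\<in>F. \<sigma> f = m" using Fne by auto
    define m where "m = (LEAST k. \<exists>f\<in>F. \<sigma> f = k)"
    have m1: "\<exists>f\<in>F. \<sigma> f = m" unfolding m_def by (rule LeastI_ex) fact
    have m2: "\<And>h. h \<in> F \<Longrightarrow> m \<le> \<sigma> h" unfolding m_def by (rule Least_le) auto
    from m1 m2 obtain f where fF: "f \<in> F" and fmin: "\<And>h. h \<in> F \<Longrightarrow> \<sigma> f \<le> \<sigma> h" by metis
    have fi: "f i \<noteq> 1" using False fF by auto
    define g where "g = f(i := 1)"
    have gG: "g \<in> grid t n" unfolding g_def using upd_grid FG fF assms(1) by auto
    have gF: "g \<notin> F" unfolding g_def using notinF fF fi by auto
    have gi: "g i = 1" and Dg: "D g = D f" unfolding g_def using DU by auto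
    have f1: "1 \<le> f i" using FG fF i unfolding grid_def by auto
    have cmp: "gle n g f" using E Dg gleR f1 gi by metis
    show False
    proof (rule twin[OF assms(7) assms(4) assms(5) fF gG gF])
      show "gle n f g \<or> gle n g f" using cmp by simp
    next
      fix h assume hF: "h \<in> F" and hf: "h \<noteq> f"
      have hG: "h \<in> grid t n" using hF FG by auto
      have h1: "1 \<le> h i" using hG i unfolding grid_def by auto
      have nhf: "\<not> gle n h f"
      proof
        assume hf': "gle n h f"
        have "\<sigma> h < \<sigma> f" unfolding \<sigma>_def using sum_less_grid[of f t n h] FG fF hG hf' hf by auto
        then show False using fmin[OF hF] by simp
      qed
      have a: "gle n h g \<longleftrightarrow> gle n h f"
        using E[of h g] E[of h f] Dg NS[OF hF fF hf] gi h1 nhf by auto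
      have b: "gle n g h \<longleftrightarrow> gle n f h"
        using E[of g h] E[of f h] Dg NS[OF fF hF hf[symmetric]] gi h1 by auto
      show "(gle n h g \<longleftrightarrow> gle n h f) \<and> (gle n g h \<longleftrightarrow> gle n f h)" using a b by simp
    qed
  qed
qed

end
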